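(* Let $d\ge 1$, $T>0$, and let ${\bf X}_1,{\bf X}_2$ be statistically independent $d$-dimensional real random vectors with characteristic functions $f_i({\bf t})=\mathbb E[e^{j{\bf t}^T{\bf X}_i}]$, $i=1,2$. Suppose ${\bf X}_1+{\bf X}_2$ and ${\bf X}_1-{\bf X}_2$ are $(\epsilon,T)$-dependent, and suppose there is a constant $p>0$ such that $|f_i({\bf t})|\ge p$ for all ${\bf t}\in\mathbb R^d$ with $\|{\bf t}\|\le T$ and $i=1,2$. Then, if $0<\epsilon\le p^4/[360d^2(d+1)]$, there exist mean vectors $\widehat{\bf m}_1,\widehat{\bf m}_2\in\mathbb R^d$ and a common symmetric positive semi-definite matrix $\widehat{\bf Q}$ such that, with the Gaussian characteristic functions $$\Phi_i({\bf t})=e^{{\bf t}^T\left(j\widehat{\bf m}_i-\frac12\widehat{\bf Q}\,{\bf t}\right)},\quad i=1,2,$$ we have for all $\|{\bf t}\|\le T/2$ and $i=1,2$ $$|f_i({\bf t})-\Phi_i({\bf t})|\le C(\epsilon)\,|\Phi_i({\bf t})|,\qquad C(\epsilon)=\frac{720d^2(d+1)}{p^4}\,\epsilon.$$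
   Context: $j=\sqrt{-1}$. For ${\bf x}\in\mathbb R^d$, $\|{\bf x}\|=\|{\bf x}\|_1=\sum_i|x_i|$. For random vectors ${\bf U}_1,{\bf U}_2$ (of possibly different dimensions) with joint characteristic function $f_{{\bf U}_1,{\bf U}_2}({\bf t}_1,{\bf t}_2)=\mathbb E[e^{j{\bf t}_1^T{\bf U}_1+j{\bf t}_2^T{\bf U}_2}]$ and marginal characteristic functions $f_{{\bf U}_1},f_{{\bf U}_2}$, and constants $\epsilon,T\ge0$: ${\bf U}_1,{\bf U}_2$ are called $(\epsilon,T)$-dependent if $\sup_{\|{\bf t}_1\|\le T,\|{\bf t}_2\|\le T}|f_{{\bf U}_1,{\bf U}_2}({\bf t}_1,{\bf t}_2)-f_{{\bf U}_1}({\bf t}_1)f_{{\bf U}_2}({\bf t}_2)|\le\epsilon$. *)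

theory Defs
  imports "HOL-Probability.Probability"
begin

definition norm1 :: "real ^ 'd \<Rightarrow> real" where
  "norm1 x = (\<Sum>i\<in>UNIV. \<bar>x $ i\<bar>)"

definition charf :: "'a measure \<Rightarrow> ('a \<Rightarrow> real ^ 'd) \<Rightarrow> real ^ 'd \<Rightarrow> complex" where
  "charf M X t = (LINT w|M. cis (t \<bullet> X w))"

definition joint_charf :: "'a measure \<Rightarrow> ('a \<Rightarrow> real ^ 'd) \<Rightarrow> ('a \<Rightarrow> real ^ 'e)
    \<Rightarrow> real ^ 'd \<Rightarrow> real ^ 'e \<Rightarrow> complex" where
  "joint_charf M U1 U2 t1 t2 = (LINT w|M. cis (t1 \<bullet> U1 w + t2 \<bullet> U2 w))"

definition eps_T_dependent :: "'a measure \<Rightarrow> ('a \<Rightarrow> real ^ 'd) \<Rightarrow> ('a \<Rightarrow> real ^ 'e)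
    \<Rightarrow> real \<Rightarrow> real \<Rightarrow> bool" where
  "eps_T_dependent M U1 U2 \<epsilon> T \<longleftrightarrow>
     (\<forall>t1 t2. norm1 t1 \<le> T \<longrightarrow> norm1 t2 \<le> T \<longrightarrow>
        cmod (joint_charf M U1 U2 t1 t2 - charf M U1 t1 * charf M U2 t2) \<le> \<epsilon>)"

definition gauss_charf :: "real ^ 'd \<Rightarrow> real ^ 'd ^ 'd \<Rightarrow> real ^ 'd \<Rightarrow> complex" where
  "gauss_charf m Q t = exp (\<i> * complex_of_real (t \<bullet> m) - complex_of_real ((t \<bullet> (Q *v t)) / 2))"

end

theory Submission
  imports Defs
begin

lemma cis_meas[measurable]:
  fixes X :: "'a \<Rightarrow> real ^ 'd"
  assumes "X \<in> borel_measurable M"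
  shows "(\<lambda>w. cis (t \<bullet> X w)) \<in> borel_measurable M"
  using assms by (intro borel_measurable_continuous_on[OF continuous_on_cis]) measurable

lemma charf_integrable:
  fixes X :: "'a \<Rightarrow> real ^ 'd"
  assumes "prob_space M" "X \<in> borel_measurable M"
  shows "integrable M (\<lambda>w. cis (t \<bullet> X w))"
proof -
  interpret prob_space M by fact
  show ?thesis
    by (rule integrable_const_bound[of _ 1]) (use assms in auto)
qed

lemma charf_zero:
  assumes "prob_space M"
  shows "charf M X 0 = 1"
proof -
  interpret prob_space M by fact
  show ?thesis unfolding charf_def by (simp add: prob_space)
qed

lemma charf_norm_le:
  fixes X :: "'a \<Rightarrow> real ^ 'd"
  assumes "prob_space M" "X \<in> borel_measurable M"
  shows "cmod (charf M X t) \<le> 1"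
proof -
  interpret prob_space M by fact
  have "cmod (charf M X t) \<le> (\<integral>w. norm (cis (t \<bullet> X w)) \<partial>M)"
    unfolding charf_def by (rule integral_norm_bound)
  also have "\<dots> = 1" by (simp add: prob_space)
  finally show ?thesis .
qed

lemma charf_neg:
  fixes X :: "'a \<Rightarrow> real ^ 'd"
  assumes "prob_space M" "X \<in> borel_measurable M"
  shows "charf M X (-t) = cnj (charf M X t)"
proof -
  have "charf M X (-t) = (LINT w|M. cnj (cis (t \<bullet> X w)))"
    unfolding charf_def by (simp add: cis_cnj)
  also have "\<dots> = cnj (charf M X t)" unfolding charf_def by (rule Bochner_Integration.integral_cnj)
  finally show ?thesis .
qed

lemma charf_cont:
  fixes X :: "'a \<Rightarrow> real ^ 'd"
  assumes "prob_space M" "X \<in> borel_measurable M"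
  shows "continuous_on UNIV (charf M X)"
proof -
  interpret prob_space M by fact
  have "isCont (charf M X) t" for t
    unfolding continuous_at_sequentially
  proof safe
    fix S assume S: "S \<longlonglongrightarrow> t"
    show "(charf M X \<circ> S) \<longlonglongrightarrow> charf M X t"
      unfolding comp_def charf_def
      by (rule integral_dominated_convergence[where w="\<lambda>_. 1"])
         (use assms in \<open>auto intro!: tendsto_intros S continuous_on_tendsto_compose[OF continuous_on_cis]\<close>)
  qed
  then show ?thesis by (simp add: continuous_at_imp_continuous_on)
qed

lemma charf_indep:
  fixes X1 X2 :: "'a \<Rightarrow> real ^ 'd"
  assumes "prob_space M" "prob_space.indep_var M borel X1 borel X2"
  shows "(LINT w|M. cis (a \<bullet> X1 w + b \<bullet> X2 w)) = charf M X1 a * charf M X2 b"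
proof -
  interpret prob_space M by fact
  from assms have m1[measurable]: "X1 \<in> borel_measurable M" by (metis indep_var_rv1 measurable_cong_sets sets_borel)
  from assms have m2[measurable]: "X2 \<in> borel_measurable M" by (metis indep_var_rv2 measurable_cong_sets sets_borel)
  have "(LINT w|M. cis (a \<bullet> X1 w + b \<bullet> X2 w)) = (LINT w|M. cis (a \<bullet> X1 w) * cis (b \<bullet> X2 w))"
    by (simp add: cis_mult)
  also have "\<dots> = charf M X1 a * charf M X2 b"
    unfolding charf_def
    by (intro indep_var_lebesgue_integral indep_var_compose[unfolded comp_def, OF assms(2)]
          charf_integrable[OF assms(1)]) auto
  finally show ?thesis .
qed

lemma norm_exp_minus_1_le: "norm (exp (z::complex) - 1) \<le> exp (norm z) - 1"
proof -
  have s: "summable (\<lambda>n. norm (inverse (fact (Suc n)) *\<^sub>R (z ^ Suc n)))"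
    using summable_norm_exp[of z] summable_Suc_iff[where f="\<lambda>n. norm (z^n /\<^sub>R fact n)"]
    by (simp add: divide_inverse_commute scaleR_conv_of_real)
  have "norm (exp z - 1) = norm (\<Sum>n. inverse (fact (Suc n)) *\<^sub>R (z ^ Suc n))"
    using exp_first_term[of z] by simp
  also have "\<dots> \<le> (\<Sum>n. norm (inverse (fact (Suc n)) *\<^sub>R (z ^ Suc n)))"
    by (rule summable_norm[OF s])
  also have "\<dots> = (\<Sum>n. inverse (fact (Suc n)) *\<^sub>R (norm z ^ Suc n))"
    by (simp add: norm_power norm_mult)
  also have "\<dots> = exp (norm z) - 1"
    using exp_first_term[of "norm z"] by simp
  finally show ?thesis .
qed

lemma norm_exp_minus_1_le2:
  assumes "norm (z::complex) \<le> 1"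
  shows "norm (exp z - 1) \<le> 2 * norm z"
proof -
  have "exp (norm z) \<le> 1 + norm z + (norm z)\<^sup>2"
    using exp_bound[of "norm z"] assms by auto
  moreover have "(norm z)\<^sup>2 \<le> norm z"
    using assms by (simp add: power2_eq_square mult_left_le)
  ultimately show ?thesis using norm_exp_minus_1_le[of z] by linarith
qed

lemma lin1:
  fixes h :: "real \<Rightarrow> real"
  assumes r: "r > 0"
    and bdd: "\<And>x. 0 \<le> x \<Longrightarrow> x \<le> r \<Longrightarrow> \<bar>h x\<bar> \<le> B"
    and hr: "h r = 0"
    and add: "\<And>a b. 0 \<le> a \<Longrightarrow> 0 \<le> b \<Longrightarrow> a + b \<le> r \<Longrightarrow> \<bar>h (a + b) - h a - h b\<bar> \<le> \<kappa>"
    and x: "0 \<le> x" "x \<le> r"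
  shows "\<bar>h x\<bar> \<le> 3 * \<kappa>"
proof -
  define M where "M = (SUP y\<in>{0..r}. \<bar>h y\<bar>)"
  have bddA: "bdd_above ((\<lambda>y. \<bar>h y\<bar>) ` {0..r})"
    using bdd by (auto intro!: bdd_aboveI2)
  have le: "\<bar>h y\<bar> \<le> M" if "0 \<le> y" "y \<le> r" for y
    unfolding M_def using that bddA by (auto intro!: cSUP_upper2)
  have half: "\<bar>h y\<bar> \<le> (M + \<kappa>) / 2" if "0 \<le> y" "y \<le> r / 2" for y
  proof -
    have "\<bar>h (y + y) - h y - h y\<bar> \<le> \<kappa>" using add[of y y] that by auto
    moreover have "\<bar>h (y + y)\<bar> \<le> M" using le[of "y+y"] that by auto
    ultimately show ?thesis by (simp add: abs_le_iff; linarith)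
  qed
  have all: "\<bar>h y\<bar> \<le> (M + 3 * \<kappa>) / 2" if "0 \<le> y" "y \<le> r" for y
  proof (cases "y \<le> r / 2")
    case True
    have "\<kappa> \<ge> 0" using add[of 0 0] r by auto
    then show ?thesis using half[OF that(1) True] by (simp add: abs_le_iff; linarith)
  next
    case False
    have "\<bar>h (y + (r - y)) - h y - h (r - y)\<bar> \<le> \<kappa>" using add[of y "r - y"] that by auto
    then have "\<bar>h y + h (r - y)\<bar> \<le> \<kappa>" using hr by simp
    moreover have "\<bar>h (r - y)\<bar> \<le> (M + \<kappa>) / 2" using half[of "r - y"] that False by auto
    ultimately show ?thesis by (simp add: abs_le_iff; linarith)
  qed
  have "(SUP y\<in>{0..r}. \<bar>h y\<bar>) \<le> (M + 3 * \<kappa>) / 2"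
    by (rule cSUP_least) (use r all in auto)
  then have "M \<le> (M + 3 * \<kappa>) / 2" unfolding M_def[symmetric] .
  then have "M \<le> 3 * \<kappa>" by (simp add: field_simps)
  then show ?thesis using le[OF x] by linarith
qed

lemma exp_const_zero:
  fixes g :: "'a::topological_space \<Rightarrow> complex"
  assumes S: "connected S" and c: "continuous_on S g"
    and e: "\<And>z. z \<in> S \<Longrightarrow> exp (g z) = 1"
    and z0: "z0 \<in> S" "g z0 = 0" and z: "z \<in> S"
  shows "g z = 0"
proof -
  have "g constant_on S"
  proof (rule continuous_discrete_range_constant[OF S c])
    fix x assume x: "x \<in> S"
    show "\<exists>e>0. \<forall>y. y \<in> S \<and> g y \<noteq> g x \<longrightarrow> e \<le> norm (g y - g x)"
    proof (intro exI[of _ "2 * pi"] conjI allI impI)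
      fix y assume y: "y \<in> S \<and> g y \<noteq> g x"
      have "exp (g y - g x) = 1" using e[of x] e[of y] x y by (simp add: exp_diff)
      then obtain n :: int where "Re (g y - g x) = 0" "Im (g y - g x) = of_int (2 * n) * pi"
        by (auto simp: exp_eq_1)
      moreover have "n \<noteq> 0" using y calculation by (auto simp: complex_eq_iff)
      have "norm (g y - g x) \<ge> \<bar>Im (g y - g x)\<bar>" by (rule abs_Im_le_cmod)
      moreover have "\<bar>Im (g y - g x)\<bar> = 2 * pi * \<bar>of_int n\<bar>"
        using calculation by (simp add: abs_mult)
      moreover have n1: "\<bar>real_of_int n\<bar> \<ge> 1" using \<open>n \<noteq> 0\<close> by linarith
      moreover have "2 * pi * 1 \<le> 2 * pi * \<bar>real_of_int n\<bar>"
        using n1 pi_gt_zero by (intro mult_left_mono) auto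
      ultimately show "2 * pi \<le> norm (g y - g x)" by (smt (verit))
    qed simp
  qed
  then show ?thesis using z0 z unfolding constant_on_def by metis
qed

lemma norm1_nonneg: "norm1 x \<ge> 0"
  unfolding norm1_def by (simp add: sum_nonneg)

lemma norm1_add: "norm1 (x + y) \<le> norm1 x + norm1 y"
  unfolding norm1_def by (simp add: sum.distrib[symmetric] sum_mono abs_triangle_ineq)

lemma norm1_neg: "norm1 (- x) = norm1 x"
  unfolding norm1_def by simp

lemma norm1_diff: "norm1 (x - y) \<le> norm1 x + norm1 y"
  using norm1_add[of x "-y"] norm1_neg[of y] by simp

lemma norm1_scale: "norm1 (c *\<^sub>R x) = \<bar>c\<bar> * norm1 x"
  unfolding norm1_def by (simp add: abs_mult sum_distrib_left)

lemma norm1_zero[simp]: "norm1 0 = 0"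
  unfolding norm1_def by simp

lemma axis_nth: "axis k c $ i = (if i = k then c else 0)"
  by (simp add: axis_def)

lemma norm1_axis[simp]: "norm1 (axis k c) = \<bar>c\<bar>"
  unfolding norm1_def by (simp add: axis_nth if_distrib cong: if_cong)

lemma axis_add: "axis k (a + b) = axis k a + axis k (b::real)"
  by (simp add: vec_eq_iff axis_nth)

lemma axis_neg: "axis k (- a) = - axis k (a::real)"
  by (simp add: vec_eq_iff axis_nth)

lemma partial_nth: "(\<Sum>k\<in>F. axis k (x $ k)) $ i = (if i \<in> F then (x::real^'d) $ i else 0)"
proof -
  have "(\<Sum>k\<in>F. axis k (x $ k)) $ i = (\<Sum>k\<in>F. axis k (x $ k) $ i)" by (rule sum_component)
  also have "\<dots> = (\<Sum>k\<in>F. if k = i then x $ i else 0)"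
    by (intro sum.cong) (auto simp: axis_nth)
  also have "\<dots> = (if i \<in> F then x $ i else 0)" by simp
  finally show ?thesis .
qed

lemma norm1_partial: "norm1 (\<Sum>k\<in>F. axis k ((x::real^'d) $ k)) \<le> norm1 x"
proof -
  have "norm1 (\<Sum>k\<in>F. axis k (x $ k)) = (\<Sum>i\<in>UNIV. \<bar>if i \<in> F then x $ i else 0\<bar>)"
    unfolding norm1_def partial_nth ..
  also have "\<dots> \<le> norm1 x" unfolding norm1_def by (intro sum_mono) auto
  finally show ?thesis .
qed

lemma sum_axis_all: "(\<Sum>k\<in>UNIV. axis k ((x::real^'d) $ k)) = x"
  unfolding vec_eq_iff partial_nth by simp

lemma nth_le_norm1: "\<bar>(x::real^'d) $ k\<bar> \<le> norm1 x"
  unfolding norm1_def by (rule member_le_sum) auto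

lemma addn:
  fixes g :: "real^'d \<Rightarrow> real"
  assumes r: "r > 0"
    and odd: "\<And>x. norm1 x \<le> r \<Longrightarrow> g (- x) = - g x"
    and bdd: "\<And>x. norm1 x \<le> r \<Longrightarrow> \<bar>g x\<bar> \<le> B"
    and add: "\<And>u v. norm1 u \<le> r \<Longrightarrow> norm1 v \<le> r \<Longrightarrow> norm1 (u + v) \<le> r \<Longrightarrow>
                 \<bar>g (u + v) - g u - g v\<bar> \<le> \<kappa>"
    and x: "norm1 x \<le> r"
  shows "\<bar>g x - (\<Sum>k\<in>UNIV. x $ k * g (axis k r) / r)\<bar> \<le> 4 * real CARD('d) * \<kappa>"
proof -
  define L where "L x = (\<Sum>k\<in>UNIV. x $ k * g (axis k r) / r)" for x :: "real^'d"
  have Ladd: "L (u + v) = L u + L v" for u v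
    unfolding L_def by (simp add: sum.distrib[symmetric] ring_distribs add_divide_distrib)
  have Lneg: "L (- u) = - L u" for u
    unfolding L_def by (simp add: sum_negf[symmetric])
  have Laxis: "L (axis k c) = c * g (axis k r) / r" for k c
  proof -
    have "(\<lambda>ka. axis k c $ ka * g (axis ka r) / r) = (\<lambda>ka. if ka = k then c * g (axis k r) / r else 0)"
      by (auto simp: axis_nth fun_eq_iff)
    then have "L (axis k c) = (\<Sum>ka\<in>UNIV. if ka = k then c * g (axis k r) / r else 0)"
      unfolding L_def by (rule arg_cong)
    then show ?thesis by simp
  qed
  define h where "h x = g x - L x" for x
  have hadd: "\<bar>h (u + v) - h u - h v\<bar> \<le> \<kappa>"
    if "norm1 u \<le> r" "norm1 v \<le> r" "norm1 (u + v) \<le> r" for u v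
    using add[OF that] unfolding h_def Ladd by (simp add: algebra_simps)
  have hodd: "h (- u) = - h u" if "norm1 u \<le> r" for u
    using odd[OF that] unfolding h_def Lneg by simp
  have h0: "h 0 = 0" using hodd[of 0] r by simp
  have k0: "\<kappa> \<ge> 0" using hadd[of 0 0] r by simp
  have one_pos: "\<bar>h (axis k c)\<bar> \<le> 3 * \<kappa>" if "0 \<le> c" "c \<le> r" for k c
  proof (rule lin1[where h="\<lambda>c. h (axis k c)" and r=r and B="2 * B"])
    show "r > 0" by fact
    show "\<bar>h (axis k y)\<bar> \<le> 2 * B" if "0 \<le> y" "y \<le> r" for y
    proof -
      have "\<bar>g (axis k y)\<bar> \<le> B" using bdd[of "axis k y"] that by simp
      moreover have "\<bar>g (axis k r)\<bar> \<le> B" using bdd[of "axis k r"] r by simp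
      moreover have "\<bar>y * g (axis k r) / r\<bar> \<le> \<bar>g (axis k r)\<bar>"
        using that r mult_right_mono[of y r "\<bar>g (axis k r)\<bar>"] by (simp add: abs_mult divide_le_eq mult.commute)
      ultimately show ?thesis unfolding h_def Laxis by (smt (verit))
    qed
    show "h (axis k r) = 0" unfolding h_def Laxis using r by simp
    show "\<bar>h (axis k (a + b)) - h (axis k a) - h (axis k b)\<bar> \<le> \<kappa>"
      if "0 \<le> a" "0 \<le> b" "a + b \<le> r" for a b
      unfolding axis_add using that by (intro hadd) (auto simp: axis_add[symmetric])
  qed (use that in auto)
  have one: "\<bar>h (axis k c)\<bar> \<le> 3 * \<kappa>" if "\<bar>c\<bar> \<le> r" for k c
  proof (cases "c \<ge> 0")
    case True then show ?thesis using one_pos that by auto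
  next
    case False
    have "h (axis k c) = - h (axis k (- c))"
      using hodd[of "axis k (- c)"] that by (simp add: axis_neg norm1_neg)
    then show ?thesis using one_pos[of "- c" k] False that by auto
  qed
  have split: "\<bar>h (\<Sum>k\<in>F. axis k (x $ k)) - (\<Sum>k\<in>F. h (axis k (x $ k)))\<bar> \<le> real (card F) * \<kappa>"
    for F :: "'d set"
  proof -
    have "finite F" by simp
    then show ?thesis
    proof (induction F rule: finite_induct)
      case empty then show ?case by (simp add: h0)
    next
      case (insert k F)
      have "\<bar>h (axis k (x $ k) + (\<Sum>k\<in>F. axis k (x $ k))) - h (axis k (x $ k)) - h (\<Sum>k\<in>F. axis k (x $ k))\<bar> \<le> \<kappa>"
      proof (rule hadd)
        show "norm1 (axis k (x $ k)) \<le> r" using nth_le_norm1[of x k] x by simp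
        show "norm1 (\<Sum>k\<in>F. axis k (x $ k)) \<le> r" using norm1_partial[where F=F and x=x] x by simp
        show "norm1 (axis k (x $ k) + (\<Sum>k\<in>F. axis k (x $ k))) \<le> r"
          using norm1_partial[where F="insert k F" and x=x] x insert by simp
      qed
      then show ?case using insert by (simp add: ring_distribs)
    qed
  qed
  have "\<bar>h x - (\<Sum>k\<in>UNIV. h (axis k (x $ k)))\<bar> \<le> real CARD('d) * \<kappa>"
    using split[of UNIV] by (simp add: sum_axis_all)
  moreover have "\<bar>\<Sum>k\<in>UNIV. h (axis k (x $ k))\<bar> \<le> (\<Sum>k\<in>(UNIV::'d set). 3 * \<kappa>)"
    by (rule order_trans[OF sum_abs sum_mono]) (use one nth_le_norm1 x in \<open>meson order_trans\<close>)
  ultimately have "\<bar>h x\<bar> \<le> 4 * real CARD('d) * \<kappa>" by simp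
  then show ?thesis unfolding h_def L_def .
qed

lemma norm1_half_sum: "norm1 ((1/2) *\<^sub>R (u + v)) \<le> (norm1 u + norm1 v) / 2"
  using norm1_add[of u v] by (simp add: norm1_scale)

lemma norm1_half_diff: "norm1 ((1/2) *\<^sub>R (u - v)) \<le> (norm1 u + norm1 v) / 2"
  using norm1_diff[of u v] by (simp add: norm1_scale)

lemma norm1_half_sum_le: "norm1 u \<le> r \<Longrightarrow> norm1 v \<le> r \<Longrightarrow> norm1 ((1/2) *\<^sub>R (u + v)) \<le> r"
  by (rule order_trans[OF norm1_half_sum]) simp

lemma norm1_half_diff_le: "norm1 u \<le> r \<Longrightarrow> norm1 v \<le> r \<Longrightarrow> norm1 ((1/2) *\<^sub>R (u - v)) \<le> r"
  by (rule order_trans[OF norm1_half_diff]) simp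

lemma aux_comb:
  fixes b S1 S2 S3 A K :: real
  assumes "S1 = S2 + S3" "\<bar>S3\<bar> \<le> A" "A \<le> K" "\<bar>b - S1\<bar> \<le> K"
  shows "\<bar>b - S2\<bar> \<le> 2 * K"
  using assms by linarith

lemma quadn:
  fixes a :: "real^'d \<Rightarrow> real"
  assumes R: "R > 0"
    and even: "\<And>x. norm1 x \<le> R \<Longrightarrow> a (- x) = a x"
    and a0: "a 0 = 0"
    and bdd: "\<And>x. norm1 x \<le> R \<Longrightarrow> \<bar>a x\<bar> \<le> B"
    and qe: "\<And>x y. norm1 x \<le> R \<Longrightarrow> norm1 y \<le> R \<Longrightarrow>
               \<bar>a (x + y) + a (x - y) - 2 * a x - 2 * a y\<bar> \<le> \<kappa>"
    and z: "norm1 z \<le> R"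
  shows "\<bar>a z - (\<Sum>k\<in>UNIV. \<Sum>l\<in>UNIV. z $ k * z $ l *
            (a (axis l (R/2) + axis k (R/2)) - a (axis l (R/2) - axis k (R/2))) / R\<^sup>2)\<bar>
         \<le> 32 * real CARD('d) * \<kappa>"
proof -
  define r where "r = R / 2"
  have r: "r > 0" using R r_def by simp
  define Bf where "Bf x y = a (x + y) - a (x - y)" for x y
  have sym: "Bf x y = Bf y x" if "norm1 x \<le> r" "norm1 y \<le> r" for x y
  proof -
    have "a (y - x) = a (x - y)"
      using even[of "x - y"] norm1_diff[of x y] that r_def by (simp add: minus_diff_eq)
    then show ?thesis unfolding Bf_def by (simp add: add.commute)
  qed
  have k0: "\<kappa> \<ge> 0" using qe[of 0 0] R by simp
  have A1: "\<bar>Bf x y - (\<Sum>k\<in>UNIV. x $ k * Bf (axis k r) y / r)\<bar> \<le> 16 * real CARD('d) * \<kappa>"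
    if y: "norm1 y \<le> r" and x: "norm1 x \<le> r" for x y
  proof -
    have "\<bar>Bf x y - (\<Sum>k\<in>UNIV. x $ k * Bf (axis k r) y / r)\<bar> \<le> 4 * real CARD('d) * (4 * \<kappa>)"
    proof (rule addn[where g="\<lambda>x. Bf x y" and B="2 * B"])
      show "r > 0" by fact
      show "norm1 x \<le> r" by fact
      show "Bf (- x) y = - Bf x y" if "norm1 x \<le> r" for x
      proof -
        have "a (- x + y) = a (x - y)"
          using even[of "x - y"] norm1_diff[of x y] that y r_def by (simp add: minus_diff_eq)
        moreover have "a (- x - y) = a (x + y)"
          using even[of "x + y"] norm1_add[of x y] that y r_def by (simp add: minus_add_distrib)
        ultimately show ?thesis unfolding Bf_def by simp
      qed
      show "\<bar>Bf x y\<bar> \<le> 2 * B" if "norm1 x \<le> r" for x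
      proof -
        have "\<bar>a (x + y)\<bar> \<le> B" using bdd[of "x + y"] norm1_add[of x y] that y r_def by simp
        moreover have "\<bar>a (x - y)\<bar> \<le> B" using bdd[of "x - y"] norm1_diff[of x y] that y r_def by simp
        ultimately show ?thesis unfolding Bf_def by (smt (verit))
      qed
      show "\<bar>Bf (u + v) y - Bf u y - Bf v y\<bar> \<le> 4 * \<kappa>"
        if u: "norm1 u \<le> r" and v: "norm1 v \<le> r" and "norm1 (u + v) \<le> r" for u v
      proof -
        define w where "w = (1/2) *\<^sub>R (u + v)"
        define d where "d = (1/2) *\<^sub>R (u - v)"
        have nw: "norm1 w \<le> r" using norm1_half_sum_le[OF u v] unfolding w_def .
        have nd: "norm1 d \<le> r" using norm1_half_diff_le[OF u v] unfolding d_def .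
        have nwy1: "norm1 (w + y) \<le> R" using norm1_add[of w y] nw y r_def by (simp add: r_def)
        have nwy2: "norm1 (w - y) \<le> R" using norm1_diff[of w y] nw y r_def by (simp add: r_def)
        have nw': "norm1 w \<le> R" and nd': "norm1 d \<le> R" using nw nd r_def R by auto
        have e1: "(w + y) + w = (u + v) + y" unfolding w_def by (simp add: algebra_simps scaleR_2[symmetric])
        have e2: "(w + y) - w = y" by simp
        have e3: "(w - y) + w = (u + v) - y" unfolding w_def by (simp add: algebra_simps scaleR_2[symmetric])
        have e4: "(w - y) - w = - y" by simp
        have e5: "(w + y) + d = u + y" unfolding w_def d_def by (simp add: algebra_simps scaleR_2[symmetric])
        have e6: "(w + y) - d = v + y" unfolding w_def d_def by (simp add: algebra_simps scaleR_2[symmetric])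
        have e7: "(w - y) + d = u - y" unfolding w_def d_def by (simp add: algebra_simps scaleR_2[symmetric])
        have e8: "(w - y) - d = v - y" unfolding w_def d_def by (simp add: algebra_simps scaleR_2[symmetric])
        have ey: "a (- y) = a y" using even[of y] y r_def R by simp
        have q1: "\<bar>a (u + v + y) + a y - 2 * a (w + y) - 2 * a w\<bar> \<le> \<kappa>"
          using qe[OF nwy1 nw'] unfolding e1 e2 .
        have q2: "\<bar>a (u + v - y) + a y - 2 * a (w - y) - 2 * a w\<bar> \<le> \<kappa>"
          using qe[OF nwy2 nw'] unfolding e3 e4 ey .
        have q3: "\<bar>a (u + y) + a (v + y) - 2 * a (w + y) - 2 * a d\<bar> \<le> \<kappa>"
          using qe[OF nwy1 nd'] unfolding e5 e6 .
        have q4: "\<bar>a (u - y) + a (v - y) - 2 * a (w - y) - 2 * a d\<bar> \<le> \<kappa>"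
          using qe[OF nwy2 nd'] unfolding e7 e8 .
        show ?thesis unfolding Bf_def using q1 q2 q3 q4 by (smt (verit))
      qed
    qed
    then show ?thesis by simp
  qed
  have A3: "\<bar>Bf x y - (\<Sum>k\<in>UNIV. \<Sum>l\<in>UNIV. x $ k * y $ l * Bf (axis l r) (axis k r) / r\<^sup>2)\<bar>
              \<le> 32 * real CARD('d) * \<kappa>"
    if x: "norm1 x \<le> r" and y: "norm1 y \<le> r" for x y
  proof -
    have ax: "norm1 (axis k r) \<le> r" for k using r by simp
    have E: "\<bar>Bf (axis k r) y - (\<Sum>l\<in>UNIV. y $ l * Bf (axis l r) (axis k r) / r)\<bar>
               \<le> 16 * real CARD('d) * \<kappa>" for k
      using A1[OF ax[of k] y] sym[OF ax[of k] y] by simp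
    define D where "D k = Bf (axis k r) y - (\<Sum>l\<in>UNIV. y $ l * Bf (axis l r) (axis k r) / r)" for k
    have "(\<Sum>k\<in>UNIV. x $ k * Bf (axis k r) y / r)
          = (\<Sum>k\<in>UNIV. \<Sum>l\<in>UNIV. x $ k * y $ l * Bf (axis l r) (axis k r) / r\<^sup>2)
            + (\<Sum>k\<in>UNIV. x $ k * D k / r)"
      unfolding D_def
      by (simp add: sum.distrib[symmetric] sum_distrib_left sum_divide_distrib
            power2_eq_square algebra_simps diff_divide_distrib sum_subtractf)
    moreover have "\<bar>\<Sum>k\<in>UNIV. x $ k * D k / r\<bar> \<le> norm1 x / r * (16 * real CARD('d) * \<kappa>)"
    proof -
      have "\<bar>\<Sum>k\<in>UNIV. x $ k * D k / r\<bar> \<le> (\<Sum>k\<in>UNIV. \<bar>x $ k\<bar> / r * (16 * real CARD('d) * \<kappa>))"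
      by (rule order_trans[OF sum_abs sum_mono])
         (use E r in \<open>auto simp: D_def abs_mult intro!: mult_left_mono divide_right_mono\<close>)
      moreover have "(\<Sum>k\<in>UNIV. \<bar>x $ k\<bar> / r * (16 * real CARD('d) * \<kappa>)) = norm1 x / r * (16 * real CARD('d) * \<kappa>)"
        unfolding norm1_def by (simp add: sum_distrib_right sum_divide_distrib)
      ultimately show ?thesis by simp
    qed
    moreover have "norm1 x / r * (16 * real CARD('d) * \<kappa>) \<le> 1 * (16 * real CARD('d) * \<kappa>)"
      using x r k0 by (intro mult_right_mono) (auto simp: divide_le_eq)
    ultimately have "\<bar>Bf x y - (\<Sum>k\<in>UNIV. \<Sum>l\<in>UNIV. x $ k * y $ l * Bf (axis l r) (axis k r) / r\<^sup>2)\<bar>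
              \<le> 2 * (16 * real CARD('d) * \<kappa>)"
      using A1[OF y x] by (intro aux_comb) auto
    then show ?thesis by simp
  qed
  define x where "x = (1/2) *\<^sub>R z"
  have nx: "norm1 x \<le> r" unfolding x_def r_def using z by (simp add: norm1_scale)
  have "Bf x x = a z" unfolding Bf_def x_def by (simp add: a0 scaleR_2[symmetric] flip: scaleR_add_left)
  moreover have "x $ k * x $ l * Bf (axis l r) (axis k r) / r\<^sup>2
      = z $ k * z $ l * (a (axis l (R/2) + axis k (R/2)) - a (axis l (R/2) - axis k (R/2))) / R\<^sup>2" for k l
    using R unfolding x_def r_def Bf_def by (simp add: power2_eq_square field_simps)
  ultimately show ?thesis using A3[OF nx nx] by simp
qed

lemma norm1_in_half: "norm1 x \<le> T/2 \<Longrightarrow> norm1 y \<le> T/2 \<Longrightarrow> norm1 (x + y) \<le> T"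
  by (rule order_trans[OF norm1_add]) simp

lemma norm1_in_half': "norm1 x \<le> T/2 \<Longrightarrow> norm1 y \<le> T/2 \<Longrightarrow> norm1 (x - y) \<le> T"
  by (rule order_trans[OF norm1_diff]) simp

lemma sq_norm1_le: "(norm1 (x::real^'d))\<^sup>2 \<le> real CARD('d) * (\<Sum>k\<in>UNIV. (x $ k)\<^sup>2)"
  using sum_squared_le_sum_of_squares[of "\<lambda>k. \<bar>x $ k\<bar>" UNIV]
  unfolding norm1_def by (simp add: mult.commute)

lemma sumsq_le_norm1: "(\<Sum>k\<in>UNIV. ((x::real^'d) $ k)\<^sup>2) \<le> (norm1 x)\<^sup>2"
proof -
  have "(\<Sum>k\<in>UNIV. (x $ k)\<^sup>2) = (\<Sum>k\<in>UNIV. \<bar>x $ k\<bar> * \<bar>x $ k\<bar>)"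
    by (simp add: power2_eq_square abs_mult[symmetric])
  also have "\<dots> \<le> (\<Sum>k\<in>UNIV. \<bar>x $ k\<bar> * norm1 x)"
    by (intro sum_mono mult_left_mono nth_le_norm1) auto
  also have "\<dots> = (norm1 x)\<^sup>2" unfolding norm1_def by (simp add: power2_eq_square sum_distrib_right)
  finally show ?thesis .
qed

lemma abs3:
  fixes A B C X d :: real
  assumes "\<bar>A\<bar> \<le> d" "\<bar>B\<bar> \<le> d" "\<bar>C\<bar> \<le> d" "X = B + C - A \<or> X = A - B - C"
  shows "\<bar>X\<bar> \<le> 3 * d"
  using assms by (smt (verit))

lemma abs_avg:
  fixes A B X e :: real
  assumes "\<bar>A\<bar> \<le> e" "\<bar>B\<bar> \<le> e" "2 * X = A + B \<or> 2 * X = - (A + B) \<or> 2 * X = B - A"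
  shows "\<bar>X\<bar> \<le> e"
  using assms by (smt (verit))

lemma comb2:
  fixes A B C d e :: real
  assumes "\<bar>A - 2 * B\<bar> \<le> d" "\<bar>B - C\<bar> \<le> e"
  shows "\<bar>A - 2 * C\<bar> \<le> d + 2 * e"
  using assms by (smt (verit))

lemma comb3:
  fixes A B C B' C' d e :: real
  assumes "\<bar>A - (B + C)\<bar> \<le> d" "\<bar>B - B'\<bar> \<le> e" "\<bar>C - C'\<bar> \<le> e"
  shows "\<bar>A - (B' + C')\<bar> \<le> d + 2 * e"
  using assms by (smt (verit))

lemma M3:
  fixes \<psi>1 \<psi>2 :: "real^'d \<Rightarrow> complex" and T \<delta> Bd :: real
  assumes T: "T > 0"
    and sym1: "\<And>x. norm1 x \<le> T \<Longrightarrow> \<psi>1 (- x) = cnj (\<psi>1 x)"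
    and sym2: "\<And>x. norm1 x \<le> T \<Longrightarrow> \<psi>2 (- x) = cnj (\<psi>2 x)"
    and z1: "\<psi>1 0 = 0" and z2: "\<psi>2 0 = 0"
    and bd1: "\<And>x. norm1 x \<le> T \<Longrightarrow> cmod (\<psi>1 x) \<le> Bd"
    and bd2: "\<And>x. norm1 x \<le> T \<Longrightarrow> cmod (\<psi>2 x) \<le> Bd"
    and neg1: "\<And>x. norm1 x \<le> T \<Longrightarrow> Re (\<psi>1 x) \<le> 0"
    and neg2: "\<And>x. norm1 x \<le> T \<Longrightarrow> Re (\<psi>2 x) \<le> 0"
    and W: "\<And>x y. norm1 x \<le> T/2 \<Longrightarrow> norm1 y \<le> T/2 \<Longrightarrow>
       cmod (\<psi>1 (2 *\<^sub>R x) + \<psi>2 (2 *\<^sub>R y) - \<psi>1 (x + y) - \<psi>2 (x + y) - \<psi>1 (x - y) - \<psi>2 (- (x - y))) \<le> \<delta>"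
  shows "\<exists>m1 m2 :: real^'d. \<exists>Q :: real^'d^'d. transpose Q = Q \<and> (\<forall>x. x \<bullet> (Q *v x) \<ge> 0) \<and>
     (\<forall>t. norm1 t \<le> T/2 \<longrightarrow>
        cmod (\<psi>1 t - (\<i> * of_real (t \<bullet> m1) - of_real (t \<bullet> (Q *v t) / 2)))
          \<le> ((192 * real CARD('d) + 1) * (real CARD('d) + 1) + 24 * real CARD('d) + 1) * \<delta> \<and>
        cmod (\<psi>2 t - (\<i> * of_real (t \<bullet> m2) - of_real (t \<bullet> (Q *v t) / 2)))
          \<le> ((192 * real CARD('d) + 1) * (real CARD('d) + 1) + 24 * real CARD('d) + 1) * \<delta>)"
proof -
  define n where "n = real CARD('d)"
  have n1: "n \<ge> 1" unfolding n_def by (simp add: Suc_le_eq)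
  define R where "R = T / 2"
  have R: "R > 0" using T R_def by simp
  have RT: "R \<le> T" using T R_def by simp
  define P1 where "P1 x = Re (\<psi>1 x)" for x
  define P2 where "P2 x = Re (\<psi>2 x)" for x
  define I1 where "I1 x = Im (\<psi>1 x)" for x
  define I2 where "I2 x = Im (\<psi>2 x)" for x
  have sP1: "P1 (- x) = P1 x" if "norm1 x \<le> T" for x using sym1[OF that] unfolding P1_def by simp
  have sP2: "P2 (- x) = P2 x" if "norm1 x \<le> T" for x using sym2[OF that] unfolding P2_def by simp
  have sI1: "I1 (- x) = - I1 x" if "norm1 x \<le> T" for x using sym1[OF that] unfolding I1_def by simp
  have sI2: "I2 (- x) = - I2 x" if "norm1 x \<le> T" for x using sym2[OF that] unfolding I2_def by simp
  have P10: "P1 0 = 0" and P20: "P2 0 = 0" and I10: "I1 0 = 0" and I20: "I2 0 = 0"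
    unfolding P1_def P2_def I1_def I2_def by (simp_all add: z1 z2)
  have d0: "\<delta> \<ge> 0" using W[of 0 0] T by (simp add: z1 z2)
  have nE: "norm1 x \<le> T" if "norm1 x \<le> R" for x using that RT by simp
  have nadd: "norm1 (x + y) \<le> T" if "norm1 x \<le> R" "norm1 y \<le> R" for x y
    using norm1_in_half[of x T y] that R_def by simp
  have ndiff: "norm1 (x - y) \<le> T" if "norm1 x \<le> R" "norm1 y \<le> R" for x y
    using norm1_in_half'[of x T y] that R_def by simp
  have rw: "\<bar>P1 (2 *\<^sub>R x) + P2 (2 *\<^sub>R y) - P1 (x + y) - P2 (x + y) - P1 (x - y) - P2 (x - y)\<bar> \<le> \<delta>"
    if "norm1 x \<le> R" "norm1 y \<le> R" for x y
  proof -
    have "P2 (- (x - y)) = P2 (x - y)" using sP2[OF ndiff[OF that]] by simp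
    moreover have "\<bar>P1 (2 *\<^sub>R x) + P2 (2 *\<^sub>R y) - P1 (x + y) - P2 (x + y) - P1 (x - y) - P2 (- (x - y))\<bar> \<le> \<delta>"
      using order_trans[OF abs_Re_le_cmod W[of x y]] that unfolding P1_def P2_def R_def by simp
    ultimately show ?thesis by simp
  qed
  have iw: "\<bar>I1 (2 *\<^sub>R x) + I2 (2 *\<^sub>R y) - I1 (x + y) - I2 (x + y) - I1 (x - y) + I2 (x - y)\<bar> \<le> \<delta>"
    if "norm1 x \<le> R" "norm1 y \<le> R" for x y
  proof -
    have "I2 (- (x - y)) = - I2 (x - y)" using sI2[OF ndiff[OF that]] by simp
    moreover have "\<bar>I1 (2 *\<^sub>R x) + I2 (2 *\<^sub>R y) - I1 (x + y) - I2 (x + y) - I1 (x - y) - I2 (- (x - y))\<bar> \<le> \<delta>"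
      using order_trans[OF abs_Im_le_cmod W[of x y]] that unfolding I1_def I2_def R_def by simp
    ultimately show ?thesis by simp
  qed
  have n0: "norm1 (0::real^'d) \<le> R" using R by simp
  have rwx: "\<bar>P1 (2 *\<^sub>R x) - 2 * P1 x - 2 * P2 x\<bar> \<le> \<delta>" if "norm1 x \<le> R" for x
    using rw[OF that n0] sP2[OF nE[OF that]] by (simp add: P20)
  have rwy: "\<bar>P2 (2 *\<^sub>R y) - 2 * P1 y - 2 * P2 y\<bar> \<le> \<delta>" if "norm1 y \<le> R" for y
    using rw[OF n0 that] sP1[OF nE[OF that]] sP2[OF nE[OF that]] by (simp add: P10)
  have iwx: "\<bar>I1 (2 *\<^sub>R x) - 2 * I1 x\<bar> \<le> \<delta>" if "norm1 x \<le> R" for x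
    using iw[OF that n0] sI2[OF nE[OF that]] by (simp add: I20)
  have iwy: "\<bar>I2 (2 *\<^sub>R y) - 2 * I2 y\<bar> \<le> \<delta>" if "norm1 y \<le> R" for y
    using iw[OF n0 that] sI1[OF nE[OF that]] sI2[OF nE[OF that]] by (simp add: I10)
  define a where "a x = P1 x + P2 x" for x
  have R1: "\<bar>a (x + y) + a (x - y) - 2 * a x - 2 * a y\<bar> \<le> 3 * \<delta>"
    if "norm1 x \<le> R" "norm1 y \<le> R" for x y
    by (rule abs3[OF rw[OF that] rwx[OF that(1)] rwy[OF that(2)]]) (simp add: a_def algebra_simps)
  define \<sigma> where "\<sigma> x = I1 x + I2 x" for x
  define \<alpha> where "\<alpha> x = I1 x - I2 x" for x
  have Dxy: "\<bar>\<sigma> x + \<alpha> x + \<sigma> y - \<alpha> y - \<sigma> (x + y) - \<alpha> (x - y)\<bar> \<le> 3 * \<delta>"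
    if "norm1 x \<le> R" "norm1 y \<le> R" for x y
    by (rule abs3[OF iw[OF that] iwx[OF that(1)] iwy[OF that(2)]]) (simp add: \<sigma>_def \<alpha>_def algebra_simps)
  have I1: "\<bar>\<sigma> (x + y) - \<sigma> x - \<sigma> y\<bar> \<le> 3 * \<delta>" if "norm1 x \<le> R" "norm1 y \<le> R" for x y
  proof -
    have e1: "\<alpha> (y - x) = - \<alpha> (x - y)"
      using sI1[OF ndiff[OF that]] sI2[OF ndiff[OF that]] unfolding \<alpha>_def by simp
    have e2: "\<sigma> (y + x) = \<sigma> (x + y)" by (simp add: add.commute)
    have eq: "2 * (\<sigma> (x + y) - \<sigma> x - \<sigma> y) = - ((\<sigma> x + \<alpha> x + \<sigma> y - \<alpha> y - \<sigma> (x + y) - \<alpha> (x - y))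
       + (\<sigma> y + \<alpha> y + \<sigma> x - \<alpha> x - \<sigma> (y + x) - \<alpha> (y - x)))"
      unfolding e1 e2 by (simp add: algebra_simps)
    show ?thesis by (rule abs_avg[OF Dxy[OF that] Dxy[OF that(2,1)]]) (use eq in blast)
  qed
  have I2: "\<bar>\<alpha> (x + y) - \<alpha> x - \<alpha> y\<bar> \<le> 3 * \<delta>" if "norm1 x \<le> R" "norm1 y \<le> R" for x y
  proof -
    have ny: "norm1 (- y) \<le> R" using that by (simp add: norm1_neg)
    have h: "- y - x = - (x + y)" by (simp add: algebra_simps)
    have ea: "\<alpha> (- y - x) = - \<alpha> (x + y)"
      unfolding h \<alpha>_def using sI1[OF nadd[OF that]] sI2[OF nadd[OF that]] by simp
    have eb: "\<alpha> (x - - y) = \<alpha> (x + y)" by simp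
    have ec: "\<sigma> (- y + x) = \<sigma> (x + - y)" by (simp add: add.commute)
    have ed: "\<alpha> (- y) = - \<alpha> y" using sI1[OF nE[OF that(2)]] sI2[OF nE[OF that(2)]] unfolding \<alpha>_def by simp
    have eq: "2 * (\<alpha> (x + y) - \<alpha> x - \<alpha> y) =
       (\<sigma> (- y) + \<alpha> (- y) + \<sigma> x - \<alpha> x - \<sigma> (- y + x) - \<alpha> (- y - x))
       - (\<sigma> x + \<alpha> x + \<sigma> (- y) - \<alpha> (- y) - \<sigma> (x + - y) - \<alpha> (x - - y))"
      unfolding ea eb ec ed by (simp add: algebra_simps)
    show ?thesis by (rule abs_avg[OF Dxy[OF that(1) ny] Dxy[OF ny that(1)]]) (use eq in blast)
  qed
  have bdP: "\<bar>a x\<bar> \<le> 2 * Bd" if "norm1 x \<le> R" for x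
    using abs_Re_le_cmod[of "\<psi>1 x"] abs_Re_le_cmod[of "\<psi>2 x"] bd1[OF nE[OF that]] bd2[OF nE[OF that]]
    unfolding a_def P1_def P2_def by linarith
  have evena: "a (- x) = a x" if "norm1 x \<le> R" for x
    unfolding a_def using sP1[OF nE[OF that]] sP2[OF nE[OF that]] by simp
  have a0: "a 0 = 0" unfolding a_def by (simp add: P10 P20)
  define Bm where "Bm k l = a (axis l (R/2) + axis k (R/2)) - a (axis l (R/2) - axis k (R/2))" for k l
  define q where "q z = (\<Sum>k\<in>UNIV. \<Sum>l\<in>UNIV. z $ k * z $ l * Bm k l / R\<^sup>2)" for z :: "real^'d"
  have Qa: "\<bar>a z - q z\<bar> \<le> 32 * n * (3 * \<delta>)" if "norm1 z \<le> R" for z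
    unfolding q_def Bm_def n_def
    by (rule quadn[OF R evena a0 bdP R1 that])
  have q_scale: "q (c *\<^sub>R z) = c\<^sup>2 * q z" for c z
    unfolding q_def by (simp add: sum_distrib_left power2_eq_square algebra_simps)
  define cR where "cR = (192 * n + 1) * \<delta>"
  have cR0: "cR \<ge> 0" unfolding cR_def using d0 n1 by simp
  have half: "norm1 ((1/2) *\<^sub>R t) \<le> R" "2 *\<^sub>R ((1/2) *\<^sub>R t) = t" if "norm1 t \<le> R" for t
    using that R by (auto simp: norm1_scale)
  have B1: "\<bar>P1 t - 2 * (q t / 4)\<bar> \<le> cR" if "norm1 t \<le> R" for t
  proof -
    have "\<bar>P1 t - 2 * a ((1/2) *\<^sub>R t)\<bar> \<le> \<delta>"
      using rwx[OF half(1)[OF that]] unfolding half(2)[OF that] a_def by simp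
    from comb2[OF this Qa[OF half(1)[OF that]]]
    show ?thesis unfolding q_scale cR_def by (simp add: power2_eq_square algebra_simps)
  qed
  have B1': "\<bar>P2 t - 2 * (q t / 4)\<bar> \<le> cR" if "norm1 t \<le> R" for t
  proof -
    have "\<bar>P2 t - 2 * a ((1/2) *\<^sub>R t)\<bar> \<le> \<delta>"
      using rwy[OF half(1)[OF that]] unfolding half(2)[OF that] a_def by simp
    from comb2[OF this Qa[OF half(1)[OF that]]]
    show ?thesis unfolding q_scale cR_def by (simp add: power2_eq_square algebra_simps)
  qed
  have qle: "q z \<le> 2 * cR" if "norm1 z \<le> R" for z
    using B1[OF that] neg1[OF nE[OF that]] unfolding P1_def by (simp add: abs_le_iff)
  define \<mu> where "\<mu> = 2 * cR * n / R\<^sup>2"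
  have mu0: "\<mu> \<ge> 0" unfolding \<mu>_def using cR0 n1 by simp
  have qall: "q x \<le> \<mu> * (\<Sum>k\<in>UNIV. (x $ k)\<^sup>2)" for x
  proof (cases "norm1 x = 0")
    case True
    then have "x $ k = 0" for k using nth_le_norm1[of x k] by simp
    then have "q x = 0" unfolding q_def by simp
    then show ?thesis using mu0 by (simp add: sum_nonneg)
  next
    case False
    define N where "N = norm1 x"
    have N: "N > 0" using False norm1_nonneg[of x] N_def by simp
    define z where "z = (R / N) *\<^sub>R x"
    have nz: "norm1 z \<le> R" unfolding z_def using N R by (simp add: norm1_scale N_def[symmetric])
    have "q z = (R / N)\<^sup>2 * q x" unfolding z_def q_scale ..
    then have qx: "q x = (N / R)\<^sup>2 * q z" using N R by (simp add: power2_eq_square field_simps)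
    have "q x \<le> (N / R)\<^sup>2 * (2 * cR)" unfolding qx by (rule mult_left_mono[OF qle[OF nz]]) simp
    also have "\<dots> = N\<^sup>2 * (2 * cR / R\<^sup>2)" by (simp add: power_divide)
    also have "\<dots> \<le> (n * (\<Sum>k\<in>UNIV. (x $ k)\<^sup>2)) * (2 * cR / R\<^sup>2)"
      by (rule mult_right_mono) (use sq_norm1_le[of x] cR0 in \<open>auto simp: N_def n_def\<close>)
    also have "\<dots> = \<mu> * (\<Sum>k\<in>UNIV. (x $ k)\<^sup>2)" unfolding \<mu>_def by simp
    finally show ?thesis .
  qed
  have Bsym: "Bm k l = Bm l k" for k l
  proof -
    have nkl: "norm1 (axis k (R/2) - axis l (R/2)) \<le> R"
      using norm1_diff[of "axis k (R/2)" "axis l (R/2)"] R by simp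
    have "a (axis l (R/2) - axis k (R/2)) = a (axis k (R/2) - axis l (R/2))"
      using evena[OF nkl] by simp
    then show ?thesis unfolding Bm_def by (simp add: add.commute)
  qed
  define Q :: "real^'d^'d" where "Q = (\<chi> k l. - Bm k l / R\<^sup>2 + (if k = l then \<mu> else 0))"
  have QT: "transpose Q = Q"
    unfolding Q_def transpose_def by (simp add: vec_eq_iff Bsym eq_commute)
  have Qv: "(Q *v t) $ k = (\<Sum>l\<in>UNIV. - Bm k l / R\<^sup>2 * t $ l) + \<mu> * t $ k" for t k
  proof -
    have "(Q *v t) $ k = (\<Sum>l\<in>UNIV. (- Bm k l / R\<^sup>2 + (if k = l then \<mu> else 0)) * t $ l)"
      unfolding Q_def matrix_vector_mult_def by simp
    also have "\<dots> = (\<Sum>l\<in>UNIV. - Bm k l / R\<^sup>2 * t $ l) + (\<Sum>l\<in>UNIV. (if k = l then \<mu> * t $ l else 0))"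
    proof -
      have "(- Bm k l / R\<^sup>2 + (if k = l then \<mu> else 0)) * t $ l
            = - Bm k l / R\<^sup>2 * t $ l + (if k = l then \<mu> * t $ l else 0)" for l
        by (simp add: ring_distribs)
      then show ?thesis by (simp only: sum.distrib)
    qed
    also have "\<dots> = (\<Sum>l\<in>UNIV. - Bm k l / R\<^sup>2 * t $ l) + \<mu> * t $ k" by simp
    finally show ?thesis .
  qed
  have qform: "t \<bullet> (Q *v t) = - q t + \<mu> * (\<Sum>k\<in>UNIV. (t $ k)\<^sup>2)" for t
  proof -
    have "t \<bullet> (Q *v t) = (\<Sum>k\<in>UNIV. t $ k * (Q *v t) $ k)" by (simp add: inner_vec_def)
    also have "\<dots> = (\<Sum>k\<in>UNIV. t $ k * (\<Sum>l\<in>UNIV. - Bm k l / R\<^sup>2 * t $ l)) + (\<Sum>k\<in>UNIV. \<mu> * (t $ k)\<^sup>2)"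
      unfolding Qv by (simp add: ring_distribs sum.distrib power2_eq_square mult_ac)
    also have "(\<Sum>k\<in>UNIV. t $ k * (\<Sum>l\<in>UNIV. - Bm k l / R\<^sup>2 * t $ l)) = - q t"
      unfolding q_def by (simp add: sum_distrib_left sum_negf[symmetric] mult_ac)
    finally show ?thesis by (simp add: sum_distrib_left)
  qed
  have PSD: "\<forall>x. x \<bullet> (Q *v x) \<ge> 0" using qall qform by simp
  define \<sigma>k where "\<sigma>k k = \<sigma> (axis k R)" for k
  define \<alpha>k where "\<alpha>k k = \<alpha> (axis k R)" for k
  define m1 :: "real^'d" where "m1 = (\<chi> k. (\<sigma>k k + \<alpha>k k) / (2 * R))"
  define m2 :: "real^'d" where "m2 = (\<chi> k. (\<sigma>k k - \<alpha>k k) / (2 * R))"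
  have Sig: "\<bar>\<sigma> x - (\<Sum>k\<in>UNIV. x $ k * \<sigma>k k / R)\<bar> \<le> 4 * n * (3 * \<delta>)" if "norm1 x \<le> R" for x
    unfolding \<sigma>k_def n_def
  proof (rule addn[OF R _ _ _ that])
    show "\<sigma> (- x) = - \<sigma> x" if "norm1 x \<le> R" for x
      unfolding \<sigma>_def using sI1[OF nE[OF that]] sI2[OF nE[OF that]] by simp
    show "\<bar>\<sigma> x\<bar> \<le> 2 * Bd" if "norm1 x \<le> R" for x
      using abs_Im_le_cmod[of "\<psi>1 x"] abs_Im_le_cmod[of "\<psi>2 x"] bd1[OF nE[OF that]] bd2[OF nE[OF that]]
      unfolding \<sigma>_def I1_def I2_def by linarith
    show "\<bar>\<sigma> (u + v) - \<sigma> u - \<sigma> v\<bar> \<le> 3 * \<delta>" if "norm1 u \<le> R" "norm1 v \<le> R" "norm1 (u + v) \<le> R" for u v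
      using I1[OF that(1,2)] .
  qed
  have Alp: "\<bar>\<alpha> x - (\<Sum>k\<in>UNIV. x $ k * \<alpha>k k / R)\<bar> \<le> 4 * n * (3 * \<delta>)" if "norm1 x \<le> R" for x
    unfolding \<alpha>k_def n_def
  proof (rule addn[OF R _ _ _ that])
    show "\<alpha> (- x) = - \<alpha> x" if "norm1 x \<le> R" for x
      unfolding \<alpha>_def using sI1[OF nE[OF that]] sI2[OF nE[OF that]] by simp
    show "\<bar>\<alpha> x\<bar> \<le> 2 * Bd" if "norm1 x \<le> R" for x
      using abs_Im_le_cmod[of "\<psi>1 x"] abs_Im_le_cmod[of "\<psi>2 x"] bd1[OF nE[OF that]] bd2[OF nE[OF that]]
      unfolding \<alpha>_def I1_def I2_def by linarith
    show "\<bar>\<alpha> (u + v) - \<alpha> u - \<alpha> v\<bar> \<le> 3 * \<delta>" if "norm1 u \<le> R" "norm1 v \<le> R" "norm1 (u + v) \<le> R" for u v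
      using I2[OF that(1,2)] .
  qed
  define cI where "cI = (24 * n + 1) * \<delta>"
  have B2: "\<bar>I1 t - t \<bullet> m1\<bar> \<le> cI" if "norm1 t \<le> R" for t
  proof -
    have "\<bar>I1 t - (\<sigma> ((1/2) *\<^sub>R t) + \<alpha> ((1/2) *\<^sub>R t))\<bar> \<le> \<delta>"
      using iwx[OF half(1)[OF that]] unfolding half(2)[OF that] \<sigma>_def \<alpha>_def by simp
    from comb3[OF this Sig[OF half(1)[OF that]] Alp[OF half(1)[OF that]]]
    have "\<bar>I1 t - ((\<Sum>k\<in>UNIV. ((1/2) *\<^sub>R t) $ k * \<sigma>k k / R) + (\<Sum>k\<in>UNIV. ((1/2) *\<^sub>R t) $ k * \<alpha>k k / R))\<bar>
          \<le> \<delta> + 2 * (4 * n * (3 * \<delta>))" .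
    moreover have "(\<Sum>k\<in>UNIV. ((1/2) *\<^sub>R t) $ k * \<sigma>k k / R) + (\<Sum>k\<in>UNIV. ((1/2) *\<^sub>R t) $ k * \<alpha>k k / R) = t \<bullet> m1"
      unfolding m1_def inner_vec_def by (subst sum.distrib[symmetric]) (rule sum.cong; simp add: add_divide_distrib diff_divide_distrib algebra_simps)
    ultimately show ?thesis unfolding cI_def by (simp add: algebra_simps)
  qed
  have B2': "\<bar>I2 t - t \<bullet> m2\<bar> \<le> cI" if "norm1 t \<le> R" for t
  proof -
    have "\<bar>I2 t - (\<sigma> ((1/2) *\<^sub>R t) + - \<alpha> ((1/2) *\<^sub>R t))\<bar> \<le> \<delta>"
      using iwy[OF half(1)[OF that]] unfolding half(2)[OF that] \<sigma>_def \<alpha>_def by simp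
    moreover have "\<bar>- \<alpha> ((1/2) *\<^sub>R t) - - (\<Sum>k\<in>UNIV. ((1/2) *\<^sub>R t) $ k * \<alpha>k k / R)\<bar> \<le> 4 * n * (3 * \<delta>)"
      using Alp[OF half(1)[OF that]] by simp
    ultimately have "\<bar>I2 t - ((\<Sum>k\<in>UNIV. ((1/2) *\<^sub>R t) $ k * \<sigma>k k / R) + - (\<Sum>k\<in>UNIV. ((1/2) *\<^sub>R t) $ k * \<alpha>k k / R))\<bar>
          \<le> \<delta> + 2 * (4 * n * (3 * \<delta>))" by (rule comb3[OF _ Sig[OF half(1)[OF that]]])
    moreover have "(\<Sum>k\<in>UNIV. ((1/2) *\<^sub>R t) $ k * \<sigma>k k / R) + - (\<Sum>k\<in>UNIV. ((1/2) *\<^sub>R t) $ k * \<alpha>k k / R) = t \<bullet> m2"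
      unfolding m2_def inner_vec_def by (subst sum_negf[symmetric], subst sum.distrib[symmetric]) (rule sum.cong; simp add: add_divide_distrib diff_divide_distrib algebra_simps)
    ultimately show ?thesis unfolding cI_def by (simp add: algebra_simps)
  qed
  have fin: "cmod (z - (\<i> * of_real (t \<bullet> m) - of_real (t \<bullet> (Q *v t) / 2)))
      \<le> ((192 * n + 1) * (n + 1) + 24 * n + 1) * \<delta>"
    if t: "norm1 t \<le> R" and zr: "\<bar>Re z - 2 * (q t / 4)\<bar> \<le> cR" and zi: "\<bar>Im z - t \<bullet> m\<bar> \<le> cI" for z t m
  proof -
    define S where "S = (\<Sum>k\<in>UNIV. (t $ k)\<^sup>2)"
    have S0: "S \<ge> 0" unfolding S_def by (simp add: sum_nonneg)
    have "S \<le> (norm1 t)\<^sup>2" unfolding S_def by (rule sumsq_le_norm1)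
    also have "\<dots> \<le> R\<^sup>2" using t norm1_nonneg[of t] by (intro power_mono) auto
    finally have SR: "S \<le> R\<^sup>2" .
    have muS: "\<mu> * S \<le> 2 * cR * n" 
    proof -
      have "\<mu> * S \<le> \<mu> * R\<^sup>2" using SR mu0 by (rule mult_left_mono)
      also have "\<dots> = 2 * cR * n" unfolding \<mu>_def using R by simp
      finally show ?thesis .
    qed
    have mS0: "\<mu> * S \<ge> 0" using mu0 S0 by simp
    have re: "Re (z - (\<i> * of_real (t \<bullet> m) - of_real (t \<bullet> (Q *v t) / 2))) = Re z - 2 * (q t / 4) + \<mu> * S / 2"
      unfolding qform S_def by simp
    have im: "Im (z - (\<i> * of_real (t \<bullet> m) - of_real (t \<bullet> (Q *v t) / 2))) = Im z - t \<bullet> m"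
      by simp
    have "\<bar>Re z - 2 * (q t / 4) + \<mu> * S / 2\<bar> \<le> cR + cR * n"
      using zr muS mS0 by (simp add: abs_le_iff)
    then have "cmod (z - (\<i> * of_real (t \<bullet> m) - of_real (t \<bullet> (Q *v t) / 2))) \<le> (cR + cR * n) + cI"
      using cmod_le[of "z - (\<i> * of_real (t \<bullet> m) - of_real (t \<bullet> (Q *v t) / 2))"] zi unfolding re im by linarith
    also have "\<dots> = ((192 * n + 1) * (n + 1) + 24 * n + 1) * \<delta>"
      unfolding cR_def cI_def by (simp add: algebra_simps)
    finally show ?thesis .
  qed
  have main: "\<forall>t. norm1 t \<le> T / 2 \<longrightarrow>
        cmod (\<psi>1 t - (\<i> * of_real (t \<bullet> m1) - of_real (t \<bullet> (Q *v t) / 2)))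
          \<le> ((192 * real CARD('d) + 1) * (real CARD('d) + 1) + 24 * real CARD('d) + 1) * \<delta> \<and>
        cmod (\<psi>2 t - (\<i> * of_real (t \<bullet> m2) - of_real (t \<bullet> (Q *v t) / 2)))
          \<le> ((192 * real CARD('d) + 1) * (real CARD('d) + 1) + 24 * real CARD('d) + 1) * \<delta>"
  proof (intro allI impI conjI)
    fix t :: "real^'d" assume t: "norm1 t \<le> T / 2"
    then have t': "norm1 t \<le> R" unfolding R_def .
    show "cmod (\<psi>1 t - (\<i> * of_real (t \<bullet> m1) - of_real (t \<bullet> (Q *v t) / 2)))
          \<le> ((192 * real CARD('d) + 1) * (real CARD('d) + 1) + 24 * real CARD('d) + 1) * \<delta>"
      using fin[OF t'] B1[OF t'] B2[OF t'] unfolding P1_def I1_def n_def by blast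
    show "cmod (\<psi>2 t - (\<i> * of_real (t \<bullet> m2) - of_real (t \<bullet> (Q *v t) / 2)))
          \<le> ((192 * real CARD('d) + 1) * (real CARD('d) + 1) + 24 * real CARD('d) + 1) * \<delta>"
      using fin[OF t'] B1'[OF t'] B2'[OF t'] unfolding P2_def I2_def n_def by blast
  qed
  show ?thesis using QT PSD main by blast
qed

lemma convex_DT: "convex {x :: real^'d. norm1 x \<le> T}"
proof (rule convexI)
  fix x y :: "real^'d" and u v :: real
  assume x: "x \<in> {x. norm1 x \<le> T}" and y: "y \<in> {x. norm1 x \<le> T}" and u: "0 \<le> u" and v: "0 \<le> v" and uv: "u + v = 1"
  have "norm1 (u *\<^sub>R x + v *\<^sub>R y) \<le> u * norm1 x + v * norm1 y"
    using norm1_add[of "u *\<^sub>R x" "v *\<^sub>R y"] u v by (simp add: norm1_scale)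
  also have "\<dots> \<le> u * T + v * T"
    using x y u v by (intro add_mono mult_left_mono) auto
  also have "\<dots> = T" using uv by (simp add: ring_distribs[symmetric])
  finally show "u *\<^sub>R x + v *\<^sub>R y \<in> {x. norm1 x \<le> T}" by simp
qed

lemma continuous_norm1: "continuous_on S (norm1 :: real^'d \<Rightarrow> real)"
  unfolding norm1_def[abs_def] by (intro continuous_intros)

lemma compact_DT: "compact {x :: real^'d. norm1 x \<le> T}"
  unfolding compact_eq_bounded_closed
proof
  show "bounded {x :: real^'d. norm1 x \<le> T}"
    unfolding bounded_iff
  proof (intro exI ballI)
    fix x :: "real^'d" assume "x \<in> {x. norm1 x \<le> T}"
    then show "norm x \<le> T" using norm_le_l1_cart[of x] unfolding norm1_def by simp
  qed
  have "closed {x :: real^'d. norm1 x \<le> T}"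
    by (rule closed_Collect_le) (auto intro: continuous_norm1 continuous_on_const)
  then show "closed {x :: real^'d. norm1 x \<le> T}" .
qed

lemma cont_log:
  fixes f :: "real^'d \<Rightarrow> complex"
  assumes cf: "continuous_on UNIV f" and f0: "f 0 = 1" and nz: "\<And>x. norm1 x \<le> T \<Longrightarrow> f x \<noteq> 0"
    and T: "T \<ge> 0" and fneg: "\<And>x. f (- x) = cnj (f x)"
  obtains \<psi> where "continuous_on {x. norm1 x \<le> T} \<psi>" "\<And>x. norm1 x \<le> T \<Longrightarrow> exp (\<psi> x) = f x"
    "\<psi> 0 = 0" "\<And>x. norm1 x \<le> T \<Longrightarrow> \<psi> (- x) = cnj (\<psi> x)"
proof -
  define D where "D = {x :: real^'d. norm1 x \<le> T}"
  have cD: "convex D" unfolding D_def by (rule convex_DT)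
  have D0: "0 \<in> D" unfolding D_def using T by simp
  have cfD: "continuous_on D f" using continuous_on_subset[OF cf] by auto
  have nzD: "\<And>x. x \<in> D \<Longrightarrow> f x \<noteq> 0" using nz unfolding D_def by auto
  obtain g where g: "continuous_on D g" "\<And>x. x \<in> D \<Longrightarrow> f x = exp (g x)"
    using continuous_logarithm_on_contractible[OF cfD convex_imp_contractible[OF cD] nzD] by blast
  define \<psi> where "\<psi> x = g x - g 0" for x
  have c\<psi>: "continuous_on D \<psi>" unfolding \<psi>_def by (intro continuous_intros g)
  have e\<psi>: "exp (\<psi> x) = f x" if "x \<in> D" for x
    unfolding \<psi>_def exp_diff using g(2)[OF that] g(2)[OF D0] f0 by simp
  have z\<psi>: "\<psi> 0 = 0" unfolding \<psi>_def by simp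
  have negD: "- x \<in> D" if "x \<in> D" for x using that unfolding D_def by (simp add: norm1_neg)
  have conn: "connected D" using cD by (rule convex_connected)
  have cont: "continuous_on D (\<lambda>x. \<psi> (- x) - cnj (\<psi> x))"
    by (intro continuous_intros continuous_on_compose2[OF c\<psi>]) (auto simp: negD)
  have exp1: "exp ((\<lambda>x. \<psi> (- x) - cnj (\<psi> x)) x) = 1" if "x \<in> D" for x
  proof -
    have "exp (\<psi> (- x) - cnj (\<psi> x)) = f (- x) / cnj (f x)"
      by (simp add: exp_diff exp_cnj[symmetric] e\<psi> that negD)
    then show ?thesis using fneg[of x] nz[of x] that unfolding D_def by simp
  qed
  have sym: "(\<lambda>x. \<psi> (- x) - cnj (\<psi> x)) x = 0" if "x \<in> D" for x
    by (rule exp_const_zero[OF conn cont exp1 D0 _ that]) (use z\<psi> in \<open>simp add: z\<psi>\<close>, metis z\<psi> minus_zero complex_cnj_zero diff_zero)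
  show ?thesis
    by (rule that[of \<psi>]) (use c\<psi> e\<psi> z\<psi> sym in \<open>auto simp: D_def\<close>)
qed

lemma tri_aux: "(a::real) \<le> e / 2 \<Longrightarrow> b \<le> e \<Longrightarrow> c \<le> b + a \<Longrightarrow> c \<le> 3/2 * e"
  by linarith

lemma not_nonpos_Re: "Re z > 0 \<Longrightarrow> z \<notin> \<real>\<^sub>\<le>\<^sub>0"
  by (auto elim!: nonpos_Reals_cases)

lemma M2:
  fixes f1 f2 \<psi>1 \<psi>2 :: "real^'d \<Rightarrow> complex" and T \<epsilon> p :: real
  assumes T: "T > 0" and p: "p > 0"
    and c1: "continuous_on {x. norm1 x \<le> T} \<psi>1" and c2: "continuous_on {x. norm1 x \<le> T} \<psi>2"
    and e1: "\<And>x. norm1 x \<le> T \<Longrightarrow> exp (\<psi>1 x) = f1 x" and e2: "\<And>x. norm1 x \<le> T \<Longrightarrow> exp (\<psi>2 x) = f2 x"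
    and z1: "\<psi>1 0 = 0" and z2: "\<psi>2 0 = 0"
    and l1: "\<And>x. norm1 x \<le> T \<Longrightarrow> cmod (f1 x) \<ge> p" and l2: "\<And>x. norm1 x \<le> T \<Longrightarrow> cmod (f2 x) \<ge> p"
    and hyp: "\<And>s t. norm1 s \<le> T \<Longrightarrow> norm1 t \<le> T \<Longrightarrow>
                cmod (f1 (s + t) * f2 (s - t) - f1 s * f2 s * (f1 t * f2 (- t))) \<le> \<epsilon>"
    and eta: "\<epsilon> / p ^ 4 \<le> 1/3"
    and x: "norm1 x \<le> T/2" and y: "norm1 y \<le> T/2"
  shows "cmod (\<psi>1 (2 *\<^sub>R x) + \<psi>2 (2 *\<^sub>R y) - \<psi>1 (x + y) - \<psi>2 (x + y) - \<psi>1 (x - y) - \<psi>2 (- (x - y)))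
           \<le> 3/2 * (\<epsilon> / p ^ 4)"
proof -
  define D where "D = {x :: real^'d. norm1 x \<le> T}"
  define S where "S = D \<times> D"
  define sp where "sp q = (1/2) *\<^sub>R (fst q + snd q)" for q :: "(real^'d) \<times> (real^'d)"
  define tp where "tp q = (1/2) *\<^sub>R (fst q - snd q)" for q :: "(real^'d) \<times> (real^'d)"
  define L where "L q = \<psi>1 (fst q) + \<psi>2 (snd q) - \<psi>1 (sp q) - \<psi>2 (sp q) - \<psi>1 (tp q) - \<psi>2 (- tp q)" for q
  have inD: "fst q \<in> D" "snd q \<in> D" "sp q \<in> D" "tp q \<in> D" "- tp q \<in> D" if "q \<in> S" for q
    using that norm1_half_sum_le[of "fst q" T "snd q"] norm1_half_diff_le[of "fst q" T "snd q"]
    unfolding S_def D_def sp_def tp_def by (auto simp: norm1_neg mem_Times_iff)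
  have spt: "sp q + tp q = fst q" "sp q - tp q = snd q" for q
    unfolding sp_def tp_def by (simp_all add: algebra_simps scaleR_2[symmetric])
  have FL: "exp (L q) = f1 (fst q) * f2 (snd q) / (f1 (sp q) * f2 (sp q) * (f1 (tp q) * f2 (- tp q)))"
    if "q \<in> S" for q
    using inD[OF that] unfolding L_def D_def by (simp add: exp_diff exp_add e1 e2)
  define \<eta> where "\<eta> = \<epsilon> / p ^ 4"
  have eps0: "\<epsilon> \<ge> 0" using hyp[of 0 0] T by (simp add: order_trans[OF norm_ge_zero])
  have eta0: "\<eta> \<ge> 0" unfolding \<eta>_def using eps0 p by simp
  have eta3: "\<eta> \<le> 1/3" unfolding \<eta>_def by (rule eta)
  have Fb: "cmod (exp (L q) - 1) \<le> \<eta>" if q: "q \<in> S" for q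
  proof -
    define A where "A = f1 (fst q) * f2 (snd q)"
    define B where "B = f1 (sp q) * f2 (sp q) * (f1 (tp q) * f2 (- tp q))"
    have "p * p * (p * p) \<le> cmod B"
      unfolding B_def norm_mult using inD[OF q] l1 l2 p unfolding D_def
      by (intro mult_mono) (auto intro: mult_mono)
    then have Bp: "cmod B \<ge> p ^ 4" by (simp add: power4_eq_xxxx mult_ac)
    have Bnz: "B \<noteq> 0" using Bp p by auto
    have AB: "cmod (A - B) \<le> \<epsilon>"
      using hyp[of "sp q" "tp q"] inD[OF q] unfolding A_def B_def D_def spt by simp
    have "exp (L q) - 1 = (A - B) / B" using FL[OF q] Bnz unfolding A_def B_def by (simp add: field_simps)
    then have "cmod (exp (L q) - 1) = cmod (A - B) / cmod B" by (simp add: norm_divide)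
    also have "\<dots> \<le> \<epsilon> / p ^ 4"
      using AB Bp p eps0 by (intro frac_le) auto
    finally show ?thesis unfolding \<eta>_def .
  qed
  have Snn: "exp (L q) \<notin> \<real>\<^sub>\<le>\<^sub>0" if "q \<in> S" for q
  proof (rule not_nonpos_Re)
    have "\<bar>Re (exp (L q) - 1)\<bar> \<le> \<eta>" using abs_Re_le_cmod[of "exp (L q) - 1"] Fb[OF that] by linarith
    then have h: "1 - Re (exp (L q)) \<le> \<eta>" by (simp add: abs_le_iff)
    have "\<eta> \<le> 1/3" using eta \<eta>_def by simp
    then show "Re (exp (L q)) > 0" using h by linarith
  qed
  have cL: "continuous_on S L"
    unfolding L_def sp_def tp_def
    by (intro continuous_intros continuous_on_compose2[OF c1] continuous_on_compose2[OF c2])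
       (use inD in \<open>auto simp: sp_def tp_def D_def\<close>)
  have conn: "connected S" unfolding S_def D_def by (intro convex_connected convex_Times convex_DT)
  have cG: "continuous_on S (\<lambda>q. L q - Ln (exp (L q)))"
    by (intro continuous_intros cL continuous_on_Ln' continuous_on_exp Snn) auto
  have S0: "(0, 0) \<in> S" unfolding S_def D_def using T by simp
  have L0: "L (0, 0) = 0" unfolding L_def sp_def tp_def by (simp add: z1 z2)
  have G0: "L q - Ln (exp (L q)) = 0" if "q \<in> S" for q
  proof -
    have "(\<lambda>q. L q - Ln (exp (L q))) q = 0"
    proof (rule exp_const_zero[OF conn cG _ S0 _ that])
      show "exp ((\<lambda>q. L q - Ln (exp (L q))) z) = 1" if "z \<in> S" for z
        using Snn[OF that] by (simp add: exp_diff)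
      show "(\<lambda>q. L q - Ln (exp (L q))) (0, 0) = 0" using L0 by simp
    qed
    then show ?thesis by simp
  qed
  define q where "q = (2 *\<^sub>R x, 2 *\<^sub>R y)"
  have qS: "q \<in> S" unfolding q_def S_def D_def using x y by (simp add: norm1_scale)
  have sq: "sp q = x + y" "tp q = x - y" unfolding q_def sp_def tp_def by (simp_all add: algebra_simps)
  have Lq: "L q = \<psi>1 (2 *\<^sub>R x) + \<psi>2 (2 *\<^sub>R y) - \<psi>1 (x + y) - \<psi>2 (x + y) - \<psi>1 (x - y) - \<psi>2 (- (x - y))"
    unfolding L_def sq by (simp add: q_def)
  define z where "z = exp (L q) - 1"
  have zb: "cmod z \<le> \<eta>" unfolding z_def by (rule Fb[OF qS])
  have z1': "cmod z < 1" using zb eta3 by linarith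
  have "L q = Ln (1 + z)" using G0[OF qS] unfolding z_def by simp
  then have "cmod (L q - z) \<le> (cmod z)\<^sup>2 / (1 - cmod z)" using Ln_approx_linear[OF z1'] by simp
  also have "\<dots> \<le> \<eta>\<^sup>2 / (1 - \<eta>)"
    using zb z1' eta3 by (intro frac_le power_mono) auto
  also have "\<dots> \<le> \<eta> / 2"
    using eta3 eta0 mult_left_mono[of "\<eta> * 3" 1 \<eta>] by (simp add: power2_eq_square field_simps)
  finally have "cmod (L q - z) \<le> \<eta> / 2" .
  then have "cmod (L q) \<le> 3/2 * \<eta>" using zb norm_triangle_sub[of "L q" z]
    by (rule tri_aux)
  then show ?thesis unfolding Lq \<eta>_def .
qed

lemma K0_bound:
  fixes n :: real
  assumes "n \<ge> 1"
  shows "(192 * n + 1) * (n + 1) + 24 * n + 1 \<le> 218 * n ^ 2 * (n + 1)"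
proof -
  have n2: "n ^ 2 \<ge> n" using assms by (simp add: power2_eq_square)
  have n3: "n ^ 3 \<ge> n ^ 2" using assms by (simp add: power2_eq_square power3_eq_cube)
  have "(192 * n + 1) * (n + 1) + 24 * n + 1 = 192 * n ^ 2 + 217 * n + 2"
    by (simp add: power2_eq_square algebra_simps)
  moreover have "218 * n ^ 2 * (n + 1) = 218 * n ^ 3 + 218 * n ^ 2"
    by (simp add: power2_eq_square power3_eq_cube algebra_simps)
  ultimately show ?thesis using n2 n3 assms by linarith
qed

lemma final_num:
  fixes n p \<epsilon> c :: real
  assumes n: "n \<ge> 1" and p: "p > 0" and e: "\<epsilon> > 0"
    and ep: "\<epsilon> \<le> p ^ 4 / (360 * n ^ 2 * (n + 1))"
    and c: "c \<le> ((192 * n + 1) * (n + 1) + 24 * n + 1) * (3/2 * (\<epsilon> / p ^ 4))"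
  shows "c \<le> 1" "2 * c \<le> 720 * n ^ 2 * (n + 1) / p ^ 4 * \<epsilon>"
proof -
  define X where "X = n ^ 2 * (n + 1)"
  have X: "X > 0" unfolding X_def using n by simp
  define \<eta> where "\<eta> = \<epsilon> / p ^ 4"
  have eta0: "\<eta> \<ge> 0" unfolding \<eta>_def using e p by simp
  have p4: "p ^ 4 > 0" using p by simp
  have "\<eta> \<le> 1 / (360 * X)" unfolding \<eta>_def X_def using ep p4 X
    by (simp add: divide_le_eq field_simps mult.assoc)
  then have Xeta: "X * \<eta> \<le> 1 / 360" using X by (simp add: field_simps)
  have K: "(192 * n + 1) * (n + 1) + 24 * n + 1 \<le> 218 * X" unfolding X_def using K0_bound[OF n] by simp
  have c2: "c \<le> 218 * X * (3/2 * \<eta>)"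
    using order_trans[OF c[unfolded \<eta>_def[symmetric]] mult_right_mono[OF K]] eta0 by simp
  then have c3: "c \<le> 327 * (X * \<eta>)" by simp
  then show "c \<le> 1" using Xeta by linarith
  have Xe0: "X * \<eta> \<ge> 0" using X eta0 by simp
  have "2 * c \<le> 720 * (X * \<eta>)" using c3 Xe0 by linarith
  also have "\<dots> = 720 * n ^ 2 * (n + 1) / p ^ 4 * \<epsilon>" unfolding X_def \<eta>_def by simp
  finally show "2 * c \<le> 720 * n ^ 2 * (n + 1) / p ^ 4 * \<epsilon>" .
qed

theorem theorem2:
  fixes M :: "'a measure" and X1 X2 :: "'a \<Rightarrow> real ^ 'd"
    and \<epsilon> T p :: real
  assumes "prob_space M"
    and "X1 \<in> borel_measurable M" and "X2 \<in> borel_measurable M"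
    and "prob_space.indep_var M borel X1 borel X2"
    and "T > 0"
    and "eps_T_dependent M (\<lambda>w. X1 w + X2 w) (\<lambda>w. X1 w - X2 w) \<epsilon> T"
    and "p > 0"
    and "\<And>t. norm1 t \<le> T \<Longrightarrow> cmod (charf M X1 t) \<ge> p"
    and "\<And>t. norm1 t \<le> T \<Longrightarrow> cmod (charf M X2 t) \<ge> p"
    and "\<epsilon> > 0"
    and "\<epsilon> \<le> p ^ 4 / (360 * real CARD('d) ^ 2 * (real CARD('d) + 1))"
  shows "\<exists>m1 m2 :: real ^ 'd. \<exists>Q :: real ^ 'd ^ 'd.
           transpose Q = Q \<and> (\<forall>x. x \<bullet> (Q *v x) \<ge> 0) \<and>
           (\<forall>t. norm1 t \<le> T / 2 \<longrightarrow>
              cmod (charf M X1 t - gauss_charf m1 Q t)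
                \<le> (720 * real CARD('d) ^ 2 * (real CARD('d) + 1) / p ^ 4) * \<epsilon>
                   * cmod (gauss_charf m1 Q t) \<and>
              cmod (charf M X2 t - gauss_charf m2 Q t)
                \<le> (720 * real CARD('d) ^ 2 * (real CARD('d) + 1) / p ^ 4) * \<epsilon>
                   * cmod (gauss_charf m2 Q t))"
proof -
  interpret prob_space M by fact
  note X1m = assms(2) and X2m = assms(3)
  define n where "n = real CARD('d)"
  have n1: "n \<ge> 1" unfolding n_def by (simp add: Suc_le_eq)
  define f1 where "f1 = charf M X1"
  define f2 where "f2 = charf M X2"
  have cf1: "continuous_on UNIV f1" unfolding f1_def by (rule charf_cont[OF assms(1) X1m])
  have cf2: "continuous_on UNIV f2" unfolding f2_def by (rule charf_cont[OF assms(1) X2m])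
  have f10: "f1 0 = 1" unfolding f1_def by (rule charf_zero[OF assms(1)])
  have f20: "f2 0 = 1" unfolding f2_def by (rule charf_zero[OF assms(1)])
  have fn1: "f1 (- x) = cnj (f1 x)" for x unfolding f1_def by (rule charf_neg[OF assms(1) X1m])
  have fn2: "f2 (- x) = cnj (f2 x)" for x unfolding f2_def by (rule charf_neg[OF assms(1) X2m])
  have fl1: "cmod (f1 x) \<le> 1" for x unfolding f1_def by (rule charf_norm_le[OF assms(1) X1m])
  have fl2: "cmod (f2 x) \<le> 1" for x unfolding f2_def by (rule charf_norm_le[OF assms(1) X2m])
  have lb1: "norm1 x \<le> T \<Longrightarrow> cmod (f1 x) \<ge> p" for x unfolding f1_def by (rule assms(8))
  have lb2: "norm1 x \<le> T \<Longrightarrow> cmod (f2 x) \<ge> p" for x unfolding f2_def by (rule assms(9))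
  have nz1: "norm1 x \<le> T \<Longrightarrow> f1 x \<noteq> 0" for x using lb1[of x] assms(7) by auto
  have nz2: "norm1 x \<le> T \<Longrightarrow> f2 x \<noteq> 0" for x using lb2[of x] assms(7) by auto
  have T0: "T \<ge> 0" using assms(5) by simp
  obtain \<psi>1 where p1: "continuous_on {x. norm1 x \<le> T} \<psi>1" "\<And>x. norm1 x \<le> T \<Longrightarrow> exp (\<psi>1 x) = f1 x"
    "\<psi>1 0 = 0" "\<And>x. norm1 x \<le> T \<Longrightarrow> \<psi>1 (- x) = cnj (\<psi>1 x)"
    using cont_log[OF cf1 f10 nz1 T0 fn1] by metis
  obtain \<psi>2 where p2: "continuous_on {x. norm1 x \<le> T} \<psi>2" "\<And>x. norm1 x \<le> T \<Longrightarrow> exp (\<psi>2 x) = f2 x"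
    "\<psi>2 0 = 0" "\<And>x. norm1 x \<le> T \<Longrightarrow> \<psi>2 (- x) = cnj (\<psi>2 x)"
    using cont_log[OF cf2 f20 nz2 T0 fn2] by metis
  obtain B1 where B1: "\<And>x. norm1 x \<le> T \<Longrightarrow> cmod (\<psi>1 x) \<le> B1"
    using compact_imp_bounded[OF compact_continuous_image[OF p1(1) compact_DT]]
    unfolding bounded_iff by auto
  obtain B2 where B2: "\<And>x. norm1 x \<le> T \<Longrightarrow> cmod (\<psi>2 x) \<le> B2"
    using compact_imp_bounded[OF compact_continuous_image[OF p2(1) compact_DT]]
    unfolding bounded_iff by auto
  have B1': "cmod (\<psi>1 x) \<le> max B1 B2" if "norm1 x \<le> T" for x using B1[OF that] by simp
  have B2': "cmod (\<psi>2 x) \<le> max B1 B2" if "norm1 x \<le> T" for x using B2[OF that] by simp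
  have neg1: "Re (\<psi>1 x) \<le> 0" if "norm1 x \<le> T" for x
  proof -
    have "exp (Re (\<psi>1 x)) = cmod (f1 x)" using p1(2)[OF that] by (metis norm_exp_eq_Re)
    then have "exp (Re (\<psi>1 x)) \<le> 1" using fl1[of x] by simp
    then show ?thesis by simp
  qed
  have neg2: "Re (\<psi>2 x) \<le> 0" if "norm1 x \<le> T" for x
  proof -
    have "exp (Re (\<psi>2 x)) = cmod (f2 x)" using p2(2)[OF that] by (metis norm_exp_eq_Re)
    then have "exp (Re (\<psi>2 x)) \<le> 1" using fl2[of x] by simp
    then show ?thesis by simp
  qed
  have joint: "joint_charf M (\<lambda>w. X1 w + X2 w) (\<lambda>w. X1 w - X2 w) s t = f1 (s + t) * f2 (s - t)" for s t
  proof -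
    have "joint_charf M (\<lambda>w. X1 w + X2 w) (\<lambda>w. X1 w - X2 w) s t
          = (LINT w|M. cis ((s + t) \<bullet> X1 w + (s - t) \<bullet> X2 w))"
      unfolding joint_charf_def by (simp add: inner_add_right inner_diff_right inner_add_left inner_diff_left algebra_simps)
    then show ?thesis unfolding f1_def f2_def using charf_indep[OF assms(1) assms(4)] by simp
  qed
  have mplus: "charf M (\<lambda>w. X1 w + X2 w) s = f1 s * f2 s" for s
  proof -
    have "charf M (\<lambda>w. X1 w + X2 w) s = (LINT w|M. cis (s \<bullet> X1 w + s \<bullet> X2 w))"
      unfolding charf_def by (simp add: inner_add_right)
    then show ?thesis unfolding f1_def f2_def using charf_indep[OF assms(1) assms(4)] by simp
  qed
  have mminus: "charf M (\<lambda>w. X1 w - X2 w) t = f1 t * f2 (- t)" for t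
  proof -
    have "charf M (\<lambda>w. X1 w - X2 w) t = (LINT w|M. cis (t \<bullet> X1 w + (- t) \<bullet> X2 w))"
      unfolding charf_def by (simp add: inner_diff_right)
    also have "\<dots> = f1 t * f2 (- t)" unfolding f1_def f2_def by (rule charf_indep[OF assms(1) assms(4)])
    finally show ?thesis .
  qed
  have hyp: "cmod (f1 (s + t) * f2 (s - t) - f1 s * f2 s * (f1 t * f2 (- t))) \<le> \<epsilon>"
    if "norm1 s \<le> T" "norm1 t \<le> T" for s t
    using assms(6) that unfolding eps_T_dependent_def joint mplus mminus by blast
  have p4: "p ^ 4 > 0" using assms(7) by simp
  have Xbig: "360 * n ^ 2 * (n + 1) \<ge> 3"
  proof -
    have "n ^ 2 \<ge> 1" using n1 by simp
    moreover have "n + 1 \<ge> 1" using n1 by simp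
    ultimately have "n ^ 2 * (n + 1) \<ge> 1" using one_le_mult_iff by (metis mult_mono' zero_le_one mult_1)
    then show ?thesis by linarith
  qed
  have eps': "\<epsilon> \<le> p ^ 4 / (360 * n ^ 2 * (n + 1))" using assms(11) unfolding n_def by simp
  have eta: "\<epsilon> / p ^ 4 \<le> 1/3"
  proof -
    have "p ^ 4 / (360 * n ^ 2 * (n + 1)) \<le> p ^ 4 / 3"
      using Xbig p4 by (intro divide_left_mono) auto
    then have "\<epsilon> \<le> p ^ 4 / 3" using eps' by linarith
    then show ?thesis using p4 by (simp add: divide_le_eq field_simps)
  qed
  have W: "cmod (\<psi>1 (2 *\<^sub>R x) + \<psi>2 (2 *\<^sub>R y) - \<psi>1 (x + y) - \<psi>2 (x + y) - \<psi>1 (x - y) - \<psi>2 (- (x - y)))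
           \<le> 3/2 * (\<epsilon> / p ^ 4)" if "norm1 x \<le> T/2" "norm1 y \<le> T/2" for x y
    by (rule M2[OF assms(5) assms(7) p1(1) p2(1) p1(2) p2(2) p1(3) p2(3) lb1 lb2 hyp eta that])
  obtain m1 m2 :: "real^'d" and Q :: "real^'d^'d" where
    Q: "transpose Q = Q" "\<forall>x. x \<bullet> (Q *v x) \<ge> 0" and
    E: "\<And>t. norm1 t \<le> T/2 \<Longrightarrow>
        cmod (\<psi>1 t - (\<i> * of_real (t \<bullet> m1) - of_real (t \<bullet> (Q *v t) / 2)))
          \<le> ((192 * n + 1) * (n + 1) + 24 * n + 1) * (3/2 * (\<epsilon> / p ^ 4)) \<and>
        cmod (\<psi>2 t - (\<i> * of_real (t \<bullet> m2) - of_real (t \<bullet> (Q *v t) / 2)))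
          \<le> ((192 * n + 1) * (n + 1) + 24 * n + 1) * (3/2 * (\<epsilon> / p ^ 4))"
    using M3[OF assms(5) p1(4) p2(4) p1(3) p2(3) B1' B2' neg1 neg2 W] unfolding n_def by metis
  have fin: "cmod (f - gauss_charf m Q t) \<le> (720 * n ^ 2 * (n + 1) / p ^ 4) * \<epsilon> * cmod (gauss_charf m Q t)"
    if f: "f = exp \<psi>" and w: "cmod (\<psi> - (\<i> * of_real (t \<bullet> m) - of_real (t \<bullet> (Q *v t) / 2)))
          \<le> ((192 * n + 1) * (n + 1) + 24 * n + 1) * (3/2 * (\<epsilon> / p ^ 4))" for f \<psi> m t
  proof -
    define \<phi> where "\<phi> = \<i> * of_real (t \<bullet> m) - of_real (t \<bullet> (Q *v t) / 2)"
    define c where "c = cmod (\<psi> - \<phi>)"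
    have g: "gauss_charf m Q t = exp \<phi>" unfolding gauss_charf_def \<phi>_def by simp
    have c1: "c \<le> 1" and c2: "2 * c \<le> 720 * n ^ 2 * (n + 1) / p ^ 4 * \<epsilon>"
      using final_num[OF n1 assms(7) assms(10) eps'] w unfolding c_def \<phi>_def by auto
    have "f - gauss_charf m Q t = exp \<phi> * (exp (\<psi> - \<phi>) - 1)"
      unfolding f g by (simp add: exp_diff field_simps)
    then have "cmod (f - gauss_charf m Q t) = cmod (exp \<phi>) * cmod (exp (\<psi> - \<phi>) - 1)"
      by (simp add: norm_mult)
    also have "\<dots> \<le> cmod (exp \<phi>) * (2 * c)"
      using norm_exp_minus_1_le2[of "\<psi> - \<phi>"] c1 unfolding c_def by (intro mult_left_mono) auto
    also have "\<dots> \<le> cmod (exp \<phi>) * (720 * n ^ 2 * (n + 1) / p ^ 4 * \<epsilon>)"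
      using c2 by (intro mult_left_mono) auto
    finally show ?thesis unfolding g by (simp add: mult_ac)
  qed
  show ?thesis
  proof (intro exI conjI)
    show "transpose Q = Q" by (rule Q(1))
    show "\<forall>x. x \<bullet> (Q *v x) \<ge> 0" by (rule Q(2))
    show "\<forall>t. norm1 t \<le> T / 2 \<longrightarrow>
              cmod (charf M X1 t - gauss_charf m1 Q t)
                \<le> (720 * real CARD('d) ^ 2 * (real CARD('d) + 1) / p ^ 4) * \<epsilon>
                   * cmod (gauss_charf m1 Q t) \<and>
              cmod (charf M X2 t - gauss_charf m2 Q t)
                \<le> (720 * real CARD('d) ^ 2 * (real CARD('d) + 1) / p ^ 4) * \<epsilon>
                   * cmod (gauss_charf m2 Q t)"
    proof (intro allI impI conjI)
      fix t :: "real^'d" assume t: "norm1 t \<le> T / 2"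
      then have tT: "norm1 t \<le> T" using assms(5) by simp
      show "cmod (charf M X1 t - gauss_charf m1 Q t)
                \<le> (720 * real CARD('d) ^ 2 * (real CARD('d) + 1) / p ^ 4) * \<epsilon> * cmod (gauss_charf m1 Q t)"
        using fin[OF p1(2)[OF tT, symmetric] conjunct1[OF E[OF t]]] unfolding f1_def n_def .
      show "cmod (charf M X2 t - gauss_charf m2 Q t)
                \<le> (720 * real CARD('d) ^ 2 * (real CARD('d) + 1) / p ^ 4) * \<epsilon> * cmod (gauss_charf m2 Q t)"
        using fin[OF p2(2)[OF tT, symmetric] conjunct2[OF E[OF t]]] unfolding f2_def n_def .
    qed
  qed
qed

end
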